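(* Let $\mathbb{K}$ be a countable set, $m\ge2$ an even integer, $\mathcal{X}$ a nonempty set, and $(\phi_k)_{k\in\mathbb{K}}$ functions $\phi_k\colon\mathcal{X}\to\mathbb{R}$ with $(\phi_k(x))_{k\in\mathbb{K}}\in\ell^m(\mathbb{K})$ for every $x\in\mathcal{X}$. Let $K(x'_1,\dots,x'_m)=\sum_{k\in\mathbb{K}}\phi_k(x'_1)\cdots\phi_k(x'_m)$ and suppose that $K(x,\dots,x)>0$ for every $x\in\mathcal{X}$. Define $$\tilde K\colon\mathcal{X}^m\to\mathbb{R},\qquad \tilde K(x'_1,\dots,x'_m)=\frac{K(x'_1,\dots,x'_m)}{K(x'_1,\dots,x'_1)^{1/m}\cdots K(x'_m,\dots,x'_m)^{1/m}}.$$ Then there exists a family $(\tilde\phi_k)_{k\in\mathbb{K}}$ of functions $\tilde\phi_k\colon\mathcal{X}\to\mathbb{R}$ with $(\tilde\phi_k(x))_{k\in\mathbb{K}}\in\ell^m(\mathbb{K})$ for every $x$, such that $\tilde K(x'_1,\dots,x'_m)=\sum_{k\in\mathbb{K}}\tilde\phi_k(x'_1)\cdots\tilde\phi_k(x'_m)$ for all $(x'_1,\dots,x'_m)\in\mathcal{X}^m$; moreover (i) $\tilde K(x,\dots,x)=1$ for every $x\in\mathcal{X}$, and (ii) $|\tilde K(x'_1,\dots,x'_m)|\le1$ for every $(x'_1,\dots,x'_m)\in\mathcal{X}^m$.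
   Context: $\ell^m(\mathbb{K})$ is the space of real families with $\sum_k|w_k|^m<\infty$. *)

theory Defs
  imports "HOL-Analysis.Analysis"
begin

definition in_ellm :: "nat \<Rightarrow> ('k \<Rightarrow> real) \<Rightarrow> bool" where
  "in_ellm m w \<longleftrightarrow> (\<lambda>k. \<bar>w k\<bar> ^ m) summable_on UNIV"

text \<open>The m-point kernel K(x'_1,...,x'_m) = sum_k phi_k(x'_1) ... phi_k(x'_m);
  a tuple in X^m is a function xs with xs 0, ..., xs (m-1).\<close>
definition kernel :: "nat \<Rightarrow> ('k \<Rightarrow> 'x \<Rightarrow> real) \<Rightarrow> (nat \<Rightarrow> 'x) \<Rightarrow> real" where
  "kernel m phi xs = (\<Sum>\<^sub>\<infinity>k. (\<Prod>i<m. phi k (xs i)))"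

definition norm_kernel :: "nat \<Rightarrow> ('k \<Rightarrow> 'x \<Rightarrow> real) \<Rightarrow> (nat \<Rightarrow> 'x) \<Rightarrow> real" where
  "norm_kernel m phi xs =
     kernel m phi xs / (\<Prod>i<m. kernel m phi (\<lambda>_. xs i) powr (1 / real m))"

end

theory Submission
  imports Defs
begin

lemma has_sum_fsum:
  fixes f :: "'i \<Rightarrow> 'k \<Rightarrow> real"
  assumes "finite I" "\<And>i. i \<in> I \<Longrightarrow> (f i has_sum s i) A"
  shows "((\<lambda>k. \<Sum>i\<in>I. f i k) has_sum (\<Sum>i\<in>I. s i)) A"
  using assms
proof (induction I rule: finite_induct)
  case empty then show ?case by simp
next
  case (insert j I)
  then show ?case by (simp add: has_sum_add)
qed

lemma amgm:
  fixes a :: "nat \<Rightarrow> real"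
  assumes "m > 0"
  shows "\<bar>\<Prod>i<m. a i\<bar> \<le> (\<Sum>i<m. \<bar>a i\<bar> ^ m) / m"
proof -
  have "(\<Prod>i<m. \<bar>a i\<bar> ^ m) powr (1 / card {..<m}) \<le> (\<Sum>i<m. \<bar>a i\<bar> ^ m / card {..<m})"
    by (rule arith_geom_mean) (use assms in auto)
  moreover have "(\<Prod>i<m. \<bar>a i\<bar> ^ m) = (\<Prod>i<m. \<bar>a i\<bar>) ^ m"
    by (simp add: prod_power_distrib)
  moreover have "((\<Prod>i<m. \<bar>a i\<bar>) ^ m) powr (1 / m) = (\<Prod>i<m. \<bar>a i\<bar>)"
  proof -
    have nn: "(\<Prod>i<m. \<bar>a i\<bar>) \<ge> 0" by (simp add: prod_nonneg)
    show ?thesis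
    proof (cases "(\<Prod>i<m. \<bar>a i\<bar>) = 0")
      case True then show ?thesis using assms by (simp only: True) simp
    next
      case False
      then have p: "(\<Prod>i<m. \<bar>a i\<bar>) > 0" using nn by linarith
      then show ?thesis using assms
        by (simp add: powr_realpow[symmetric] powr_powr)
    qed
  qed
  ultimately show ?thesis
    by (simp add: abs_prod sum_divide_distrib)
qed


theorem proposition4p5:
  fixes phi :: "'k::countable \<Rightarrow> 'x \<Rightarrow> real" and X :: "'x set" and m :: nat
  assumes "even m" and "m \<ge> 2" and "X \<noteq> {}"
    and "\<And>x. x \<in> X \<Longrightarrow> in_ellm m (\<lambda>k. phi k x)"
    and "\<And>x. x \<in> X \<Longrightarrow> kernel m phi (\<lambda>_. x) > 0"
  shows "\<exists>psi :: 'k \<Rightarrow> 'x \<Rightarrow> real.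
           (\<forall>x\<in>X. in_ellm m (\<lambda>k. psi k x)) \<and>
           (\<forall>xs. (\<forall>i<m. xs i \<in> X) \<longrightarrow>
              ((\<lambda>k. \<Prod>i<m. psi k (xs i)) has_sum norm_kernel m phi xs) UNIV) \<and>
           (\<forall>x\<in>X. norm_kernel m phi (\<lambda>_. x) = 1) \<and>
           (\<forall>xs. (\<forall>i<m. xs i \<in> X) \<longrightarrow> \<bar>norm_kernel m phi xs\<bar> \<le> 1)"
proof -
  have m0: "m > 0" using assms(2) by simp
  define D where "D x = kernel m phi (\<lambda>_. x)" for x
  define c where "c x = D x powr (1 / real m)" for x
  define psi where "psi k x = phi k x / c x" for k x
  have Dsum: "D x = (\<Sum>\<^sub>\<infinity>k. phi k x ^ m)" for x
    by (simp add: D_def kernel_def)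
  have Dpos: "D x > 0" if "x \<in> X" for x using assms(5)[OF that] by (simp add: D_def)
  have cpos: "c x > 0" if "x \<in> X" for x using Dpos[OF that] by (simp add: c_def)
  have cm: "c x ^ m = D x" if "x \<in> X" for x
  proof -
    have "c x ^ m = D x powr (real m * (1 / real m))"
      unfolding c_def using Dpos[OF that] by (simp add: powr_power)
    also have "\<dots> = D x" using m0 Dpos[OF that] by simp
    finally show ?thesis .
  qed
  have phis: "((\<lambda>k. phi k x ^ m) has_sum D x) UNIV" if "x \<in> X" for x
  proof -
    have "(\<lambda>k. \<bar>phi k x\<bar> ^ m) summable_on UNIV" using assms(4)[OF that] by (simp add: in_ellm_def)
    then have "(\<lambda>k. phi k x ^ m) summable_on UNIV" using assms(1) by (simp add: power_even_abs)
    then show ?thesis by (simp add: Dsum)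
  qed
  have F1: "((\<lambda>k. \<bar>psi k x\<bar> ^ m) has_sum 1) UNIV" if "x \<in> X" for x
  proof -
    have "((\<lambda>k. phi k x ^ m / c x ^ m) has_sum (D x / c x ^ m)) UNIV"
      by (rule has_sum_divide_const[OF phis[OF that]])
    moreover have "\<bar>psi k x\<bar> ^ m = phi k x ^ m / c x ^ m" for k
      using cpos[OF that] assms(1) by (simp add: psi_def power_divide power_even_abs)
    ultimately show ?thesis using cm[OF that] Dpos[OF that] by simp
  qed
  have cm1: "(\<Prod>i<m. c x) = c x ^ m" for x by simp
  show ?thesis
  proof (intro exI[of _ psi] conjI ballI allI impI)
    fix x assume "x \<in> X"
    then show "in_ellm m (\<lambda>k. psi k x)" unfolding in_ellm_def using F1 has_sum_imp_summable by blast
  next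
    fix x assume x: "x \<in> X"
    have "norm_kernel m phi (\<lambda>_. x) = D x / (\<Prod>i<m. c x)"
      by (simp add: norm_kernel_def D_def c_def)
    then show "norm_kernel m phi (\<lambda>_. x) = 1" using cm[OF x] Dpos[OF x] by simp
  next
    fix xs :: "nat \<Rightarrow> 'x" assume xs: "\<forall>i<m. xs i \<in> X"
    define C where "C = (\<Prod>i<m. c (xs i))"
    have Cpos: "C > 0" unfolding C_def using xs cpos by (intro prod_pos) auto
    define B where "B k = (\<Sum>i<m. \<bar>psi k (xs i)\<bar> ^ m) / m" for k
    have Bs: "(B has_sum 1) UNIV"
    proof -
      have "((\<lambda>k. \<Sum>i<m. \<bar>psi k (xs i)\<bar> ^ m) has_sum (\<Sum>i<m. (1::real))) UNIV"
        by (rule has_sum_fsum) (use xs F1 in auto)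
      then have "((\<lambda>k. (\<Sum>i<m. \<bar>psi k (xs i)\<bar> ^ m) / m) has_sum (\<Sum>i<m. (1::real)) / m) UNIV"
        by (rule has_sum_divide_const)
      then show ?thesis using m0 by (simp add: B_def[abs_def])
    qed
    have bnd: "\<bar>\<Prod>i<m. psi k (xs i)\<bar> \<le> B k" for k
      unfolding B_def by (rule amgm[OF m0])
    have Bnn: "B k \<ge> 0" for k unfolding B_def by (simp add: sum_nonneg)
    have sumpsi: "(\<lambda>k. \<Prod>i<m. psi k (xs i)) summable_on UNIV"
    proof -
      have "(\<lambda>k. \<bar>\<Prod>i<m. psi k (xs i)\<bar>) summable_on UNIV"
        by (rule summable_on_comparison_test[OF has_sum_imp_summable[OF Bs]]) (use bnd in auto)
      then have "(\<lambda>k. norm (\<Prod>i<m. psi k (xs i))) summable_on UNIV" by simp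
      then show ?thesis by (rule abs_summable_summable)
    qed
    have eq: "(\<Prod>i<m. psi k (xs i)) = (\<Prod>i<m. phi k (xs i)) / C" for k
      by (simp add: psi_def C_def prod_dividef)
    have "(\<lambda>k. \<Prod>i<m. phi k (xs i)) summable_on UNIV"
    proof -
      have "(\<lambda>k. (\<Prod>i<m. psi k (xs i)) * C) summable_on UNIV"
        by (rule summable_on_cmult_left[OF sumpsi])
      moreover have "(\<Prod>i<m. psi k (xs i)) * C = (\<Prod>i<m. phi k (xs i))" for k
        using Cpos by (simp add: eq)
      ultimately show ?thesis by simp
    qed
    then have "((\<lambda>k. \<Prod>i<m. phi k (xs i)) has_sum kernel m phi xs) UNIV"
      by (simp add: kernel_def)
    then have "((\<lambda>k. (\<Prod>i<m. phi k (xs i)) / C) has_sum kernel m phi xs / C) UNIV"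
      by (rule has_sum_divide_const)
    moreover have "norm_kernel m phi xs = kernel m phi xs / C"
      by (simp add: norm_kernel_def C_def c_def D_def)
    ultimately have HS: "((\<lambda>k. \<Prod>i<m. psi k (xs i)) has_sum norm_kernel m phi xs) UNIV"
      by (simp add: eq)
    then show "((\<lambda>k. \<Prod>i<m. psi k (xs i)) has_sum norm_kernel m phi xs) UNIV" .
    have "norm (norm_kernel m phi xs) \<le> 1"
      by (rule norm_infsum_le[OF HS Bs]) (use bnd in simp)
    then show "\<bar>norm_kernel m phi xs\<bar> \<le> 1" by simp
  qed
qed

end
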